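(* Let $n\ge2$ be an integer, $j$ a positive integer, $\lambda\in\mathbb{R}$ with $\lambda\ge\frac{(n-1)j}{2}$, and set $\alpha=1-\frac1n$, $\beta=\frac12(1-\frac1n)-\frac{\lambda}{jn}$. Define $\mathcal{G}(z)=e^{jz^n/2}\,\mathcal{M}(\beta,\alpha,-jz^n)$ and $\mathcal{D}(z)=e^{jz^n/2}\,\mathcal{T}(\beta,\alpha,-jz^n)$ for $z>0$. Then the Wronskian $\mathcal{G}(z)\mathcal{D}'(z)-\mathcal{G}'(z)\mathcal{D}(z)$ is constant, equal to $\frac{\Gamma(\alpha-1)}{\Gamma(\alpha-\beta)}\,j^{1/n}$.
   Context: $(x)_k=\prod_{m=1}^k(x+m-1)$, $(x)_0=1$. Kummer's function: $\mathcal{M}(\beta,\alpha,y)=\sum_{k\ge0}\frac{(\beta)_k}{(\alpha)_k}\frac{y^k}{k!}$. For $y<0$ and $\alpha>\beta$: $\mathcal{T}(\beta,\alpha,y)=\frac{e^y}{\Gamma(\alpha-\beta)}\int_0^\infty e^{yt}t^{\alpha-\beta-1}(1+t)^{\beta-1}\,dt$. *)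

theory Defs
  imports "HOL-Analysis.Analysis"
begin

definition kummerM :: "real \<Rightarrow> real \<Rightarrow> real \<Rightarrow> real" where
  "kummerM b a y = (\<Sum>k. pochhammer b k / pochhammer a k * y ^ k / fact k)"

text \<open>The integral function T(beta, alpha, y) (meant for y < 0, alpha > beta).\<close>
definition kummerT :: "real \<Rightarrow> real \<Rightarrow> real \<Rightarrow> real" where
  "kummerT b a y = exp y / Gamma (a - b) *
     integral {0<..} (\<lambda>t. exp (y * t) * t powr (a - b - 1) * (1 + t) powr (b - 1))"

end

theory Submission
  imports Defs "HOL-Real_Asymp.Real_Asymp"
begin

lemma gamma_scaled:
  fixes c x :: real assumes c: "c > 0" and x: "x > 0"
  shows "((\<lambda>t. t powr (c - 1) * exp (- x * t)) has_integral Gamma c / x powr c) {0<..}"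
proof -
  have G0: "((\<lambda>t. t powr (c - 1) / exp t) has_integral Gamma c) {0..}"
    by (rule Gamma_integral_real[OF c])
  hence "((\<lambda>t. if t \<in> {0<..} then t powr (c - 1) / exp t else 0) has_integral Gamma c) {0..}"
    by (rule has_integral_spike [of "{0}", rotated 2]) auto
  hence G1: "((\<lambda>t. t powr (c - 1) / exp t) has_integral Gamma c) {0<..}"
    by (subst (asm) has_integral_restrict) auto
  have abs1: "(\<lambda>t. t powr (c - 1) / exp t) absolutely_integrable_on {0<..}"
    using G1 by (intro nonnegative_absolutely_integrable_1) (auto simp: has_integral_integrable)
  have img: "(\<lambda>s. x * s) ` {0<..} = {0<..}"
  proof (intro equalityI subsetI)
    fix t :: real assume "t \<in> {0<..}"
    then show "t \<in> (\<lambda>s. x * s) ` {0<..}" using x by (intro image_eqI[of _ _ "t / x"]) auto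
  qed (use x in auto)
  have "(\<lambda>s. \<bar>x\<bar> * ((x * s) powr (c - 1) / exp (x * s))) absolutely_integrable_on {0<..} \<and>
        integral {0<..} (\<lambda>s. \<bar>x\<bar> * ((x * s) powr (c - 1) / exp (x * s))) = Gamma c"
    apply (subst has_absolute_integral_change_of_variables_1'[of "{0<..}" "\<lambda>s. x * s" "\<lambda>_. x"
        "\<lambda>t. t powr (c - 1) / exp t" "Gamma c"])
    using abs1 G1 x img
    by (auto intro!: derivative_eq_intros inj_onI simp: integral_unique)
  then have H: "((\<lambda>s. \<bar>x\<bar> * ((x * s) powr (c - 1) / exp (x * s))) has_integral Gamma c) {0<..}"
    using set_lebesgue_integral_eq_integral(1) has_integral_integral by metis
  have "((\<lambda>s. (1 / x powr c) * (\<bar>x\<bar> * ((x * s) powr (c - 1) / exp (x * s)))) has_integral (1 / x powr c) * Gamma c) {0<..}"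
    by (rule has_integral_mult_right[OF H])
  moreover have "(1 / x powr c) * (\<bar>x\<bar> * ((x * s) powr (c - 1) / exp (x * s))) = s powr (c - 1) * exp (- x * s)"
    if "s \<in> {0<..}" for s
  proof -
    have "(x * s) powr (c - 1) = x powr (c - 1) * s powr (c - 1)" using x that by (simp add: powr_mult)
    moreover have "x powr c = x * x powr (c - 1)" using x by (simp add: powr_diff)
    ultimately show ?thesis using x by (simp add: exp_minus field_simps)
  qed
  ultimately show ?thesis
    by (subst has_integral_cong[symmetric]) (auto simp: field_simps)
qed

lemma abs_int_bound:
  fixes f g :: "real \<Rightarrow> real"
  assumes "continuous_on {0<..} f" "g integrable_on {0<..}" "\<And>t. t > 0 \<Longrightarrow> \<bar>f t\<bar> \<le> g t"
  shows "f absolutely_integrable_on {0<..}"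
  by (rule measurable_bounded_by_integrable_imp_absolutely_integrable[OF
        continuous_imp_measurable_on_sets_lebesgue[OF assms(1)] _ assms(2)]) (use assms(3) in auto)

definition jint :: "real \<Rightarrow> real \<Rightarrow> nat \<Rightarrow> real \<Rightarrow> real \<Rightarrow> real" where
  "jint al be k y t = t ^ k * (exp (y * t) * t powr (al - be - 1) * (1 + t) powr (be - 1))"

definition Jf :: "real \<Rightarrow> real \<Rightarrow> nat \<Rightarrow> real \<Rightarrow> real" where
  "Jf al be k y = integral {0<..} (jint al be k y)"

lemma gamma_scaled_int:
  fixes c x :: real assumes "c > 0" "x > 0"
  shows "(\<lambda>t. t powr (c - 1) * exp (- x * t)) integrable_on {0<..}"
  using gamma_scaled[OF assms] by blast

context
  fixes al be :: real
  assumes al0: "0 < al" and al1: "al < 1" and be0: "be \<le> 0"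
begin

lemma jint_cont: "continuous_on {0<..} (jint al be k y)"
  unfolding jint_def by (intro continuous_intros) auto

lemma jint_bound:
  assumes "t > 0"
  shows "\<bar>jint al be k y t\<bar> \<le> t powr ((al - be + k) - 1) * exp (- (- y) * t)"
proof -
  have "(1 + t) powr (be - 1) \<le> (1 + t) powr 0" using assms be0 by (intro powr_mono) auto
  hence p1: "(1 + t) powr (be - 1) \<le> 1" using assms by simp
  have "t ^ k * t powr (al - be - 1) = t powr ((al - be + k) - 1)"
    using assms by (simp add: powr_realpow[symmetric] powr_add[symmetric] algebra_simps)
  hence "\<bar>jint al be k y t\<bar> = t powr ((al - be + k) - 1) * exp (y * t) * (1 + t) powr (be - 1)"
    using assms unfolding jint_def by (simp add: abs_mult)
  also have "\<dots> \<le> t powr ((al - be + k) - 1) * exp (y * t) * 1"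
    by (intro mult_left_mono p1) auto
  finally show ?thesis by simp
qed

lemma jint_absint:
  assumes "y < 0"
  shows "jint al be k y absolutely_integrable_on {0<..}"
  by (rule abs_int_bound[OF jint_cont gamma_scaled_int jint_bound]) (use assms al0 be0 in auto)

lemma jint_int: "y < 0 \<Longrightarrow> jint al be k y integrable_on {0<..}"
  using jint_absint set_lebesgue_integral_eq_integral(1) by blast

end

context
  fixes al be :: real
  assumes al0: "0 < al" and al1: "al < 1" and be0: "be \<le> 0"
begin

lemma jint_deriv_param: "((\<lambda>u. jint al be k u t) has_real_derivative jint al be (Suc k) y t) (at y)"
  unfolding jint_def by (auto intro!: derivative_eq_intros simp: algebra_simps)

lemma Jf_deriv:
  assumes y: "y < 0"
  shows "(Jf al be k has_real_derivative Jf al be (Suc k) y) (at y)"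
proof -
  define d where "d = - y / 2"
  have d: "d > 0" "y + d < 0" using y by (auto simp: d_def)
  have key: "(\<lambda>i. (Jf al be k (X i) - Jf al be k y) / (X i - y)) \<longlonglongrightarrow> Jf al be (Suc k) y"
    if X: "\<And>i. X i \<in> ball y d - {y}" "X \<longlonglongrightarrow> y" for X
  proof -
    define F where "F i t = (jint al be k (X i) t - jint al be k y t) / (X i - y)" for i t
    have Xneg: "X i < 0" for i using X(1)[of i] d by (auto simp: dist_real_def)
    have eq: "(Jf al be k (X i) - Jf al be k y) / (X i - y) = integral {0<..} (F i)" for i
      unfolding F_def Jf_def
      by (simp add: integral_diff[OF jint_int[OF al0 al1 be0 Xneg] jint_int[OF al0 al1 be0 y]])
    have Fint: "F i integrable_on {0<..}" for i
      unfolding F_def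
      by (intro integrable_on_divide integrable_diff jint_int[OF al0 al1 be0 Xneg] jint_int[OF al0 al1 be0 y])
    have hint: "jint al be (Suc k) (y + d) integrable_on {0<..}"
      by (rule jint_int[OF al0 al1 be0 d(2)])
    have bound: "norm (F i t) \<le> jint al be (Suc k) (y + d) t" if t: "t \<in> {0<..}" for i t
    proof -
      have t0: "t > 0" using t by auto
      have "norm (exp (X i * t) - exp (y * t)) \<le> (t * exp ((y + d) * t)) * norm (X i - y)"
      proof (rule field_differentiable_bound[of "ball y d" "\<lambda>u. exp (u * t)" "\<lambda>u. t * exp (u * t)"])
        show "convex (ball y d)" by simp
        show "((\<lambda>u. exp (u * t)) has_field_derivative t * exp (u * t)) (at u within ball y d)" for u
          by (auto intro!: derivative_eq_intros)
        show "norm (t * exp (u * t)) \<le> t * exp ((y + d) * t)" if "u \<in> ball y d" for u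
          using that t0 by (auto simp: dist_real_def abs_mult intro!: mult_left_mono)
        show "X i \<in> ball y d" "y \<in> ball y d" using X(1)[of i] d by auto
      qed
      moreover have "X i \<noteq> y" using X(1)[of i] by auto
      ultimately have q: "\<bar>(exp (X i * t) - exp (y * t)) / (X i - y)\<bar> \<le> t * exp ((y + d) * t)"
        by (simp add: divide_le_eq abs_divide)
      define A where "A = t ^ k * t powr (al - be - 1) * (1 + t) powr (be - 1)"
      have A0: "A \<ge> 0" using t0 unfolding A_def by simp
      have "F i t = A * ((exp (X i * t) - exp (y * t)) / (X i - y))"
        unfolding F_def jint_def A_def by (simp add: field_simps)
      moreover have "jint al be (Suc k) (y + d) t = A * (t * exp ((y + d) * t))"
        unfolding jint_def A_def by (simp add: field_simps)
      ultimately show ?thesis using A0 mult_left_mono[OF q A0]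
        by (simp add: abs_mult)
    qed
    have conv: "(\<lambda>i. F i t) \<longlonglongrightarrow> jint al be (Suc k) y t" if "t \<in> {0<..}" for t
    proof -
      have "((\<lambda>u. (jint al be k u t - jint al be k y t) / (u - y)) \<longlongrightarrow> jint al be (Suc k) y t) (at y)"
        using jint_deriv_param[of k t y] by (simp add: has_field_derivative_iff)
      then show ?thesis
        unfolding tendsto_at_iff_sequentially F_def comp_def using X by auto
    qed
    have "(\<lambda>i. integral {0<..} (F i)) \<longlonglongrightarrow> integral {0<..} (jint al be (Suc k) y)"
      by (rule dominated_convergence(2)[OF Fint hint bound conv])
    moreover have "(\<lambda>i. (Jf al be k (X i) - Jf al be k y) / (X i - y)) = (\<lambda>i. integral {0<..} (F i))"
      using eq by (rule ext)
    ultimately show ?thesis by (simp only: Jf_def)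
  qed
  have "((\<lambda>u. (Jf al be k u - Jf al be k y) / (u - y)) \<longlongrightarrow> Jf al be (Suc k) y) (at y within ball y d)"
    unfolding tendsto_at_iff_sequentially comp_def using key by simp
  then have "((\<lambda>u. (Jf al be k u - Jf al be k y) / (u - y)) \<longlongrightarrow> Jf al be (Suc k) y) (at y)"
    using d at_within_open[of y "ball y d"] by simp
  then show ?thesis unfolding has_field_derivative_iff .
qed

end

lemma abs_to_lborel:
  fixes f :: "real \<Rightarrow> real"
  assumes "continuous_on {0<..} f" "f absolutely_integrable_on {0<..}"
  shows "set_integrable lborel {0<..} f"
proof -
  have m: "(\<lambda>x. indicator {0<..} x *\<^sub>R f x) \<in> borel_measurable lborel"
    using borel_measurable_continuous_on_indicator[OF _ assms(1)] by simp
  show ?thesis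
    using assms(2) integrable_completion[OF m] unfolding set_integrable_def by simp
qed

context
  fixes al be :: real
  assumes al0: "0 < al" and al1: "al < 1" and be0: "be \<le> 0"
begin

lemma ibp:
  assumes y: "y < 0"
  shows "y * (Jf al be 2 y + Jf al be 1 y) + al * Jf al be 1 y + (al - be) * Jf al be 0 y = 0"
proof -
  define f where "f t = y * jint al be 2 y t + y * jint al be 1 y t + al * jint al be 1 y t
      + (al - be) * jint al be 0 y t" for t
  define FT where "FT t = exp (y * t) * t powr (al - be) * (1 + t) powr be" for t
  note ai = jint_absint[OF al0 al1 be0 y]
  have fabs: "f absolutely_integrable_on {0<..}"
    unfolding f_def
    by (intro set_integral_add set_integrable_mult_right ai)
  have fcont: "continuous_on {0<..} f"
    unfolding f_def by (intro continuous_intros jint_cont[OF al0 al1 be0])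
  have der: "(FT has_real_derivative f t) (at t)" if t: "t > 0" for t
  proof -
    have e1: "t powr (al - be) = t * t powr (al - be - 1)"
    proof -
      have "t powr (al - be) = t powr (1 + (al - be - 1))" by simp
      also have "\<dots> = t powr 1 * t powr (al - be - 1)" by (rule powr_add)
      finally show ?thesis using t by simp
    qed
    have e2: "(1 + t) powr be = (1 + t) * (1 + t) powr (be - 1)"
    proof -
      have "(1 + t) powr be = (1 + t) powr (1 + (be - 1))" by simp
      also have "\<dots> = (1 + t) powr 1 * (1 + t) powr (be - 1)" by (rule powr_add)
      finally show ?thesis using t by simp
    qed
    have "(FT has_real_derivative
        y * exp (y * t) * t powr (al - be) * (1 + t) powr be
        + exp (y * t) * ((al - be) * t powr (al - be - 1)) * (1 + t) powr be
        + exp (y * t) * t powr (al - be) * (be * (1 + t) powr (be - 1))) (at t)"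
      unfolding FT_def using t
      by (auto intro!: derivative_eq_intros has_real_derivative_powr simp: algebra_simps)
    moreover have "y * exp (y * t) * t powr (al - be) * (1 + t) powr be
        + exp (y * t) * ((al - be) * t powr (al - be - 1)) * (1 + t) powr be
        + exp (y * t) * t powr (al - be) * (be * (1 + t) powr (be - 1)) = f t"
      unfolding f_def jint_def e1 e2 by (simp add: algebra_simps power2_eq_square)
    ultimately show ?thesis by simp
  qed
  have lim0: "(FT \<longlongrightarrow> 0) (at_right 0)"
  proof -
    have "((\<lambda>t. t powr (al - be)) \<longlongrightarrow> 0) (at_right 0)"
      using al0 be0 by real_asymp
    then have "((\<lambda>t. exp (y * t) * t powr (al - be) * (1 + t) powr be) \<longlongrightarrow> exp (y * 0) * 0 * (1 + 0) powr be) (at_right 0)"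
      by (intro tendsto_intros) auto
    then show ?thesis unfolding FT_def by simp
  qed
  have liminf: "(FT \<longlongrightarrow> 0) at_top"
  proof (rule tendsto_sandwich[of "\<lambda>_. 0" _ _ "\<lambda>t. t powr (al - be) * exp (y * t)"])
    show "\<forall>\<^sub>F t in at_top. 0 \<le> FT t"
      using eventually_gt_at_top[of 0] by eventually_elim (simp add: FT_def)
    show "\<forall>\<^sub>F t in at_top. FT t \<le> t powr (al - be) * exp (y * t)"
      using eventually_gt_at_top[of 0]
    proof eventually_elim
      case (elim t)
      have "(1 + t) powr be \<le> (1 + t) powr 0" using elim be0 by (intro powr_mono) auto
      then have "(1 + t) powr be \<le> 1" using elim by simp
      then show ?case unfolding FT_def using elim
        by (simp add: mult_left_le mult.commute mult.left_commute)
    qed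
    show "((\<lambda>t. t powr (al - be) * exp (y * t)) \<longlongrightarrow> 0) at_top"
      using al0 be0 y by real_asymp
  qed simp
  have si: "set_integrable lborel (einterval 0 \<infinity>) f"
    using abs_to_lborel[OF fcont fabs] by (simp add: einterval_def zero_ereal_def greaterThan_def)
  have "(LBINT x=0..\<infinity>. f x) = 0 - 0"
  proof (rule interval_integral_FTC_integrable[where F = FT])
    show "(FT has_vector_derivative f x) (at x)" if "0 < ereal x" "ereal x < \<infinity>" for x
      using der[of x] that by (simp add: has_real_derivative_iff_has_vector_derivative zero_ereal_def)
    show "isCont f x" if "0 < ereal x" "ereal x < \<infinity>" for x
      using fcont that by (simp add: continuous_on_eq_continuous_at zero_ereal_def)
    show "((FT \<circ> real_of_ereal) \<longlongrightarrow> 0) (at_right 0)"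
      using lim0 unfolding zero_ereal_def ereal_tendsto_simps1 .
    show "((FT \<circ> real_of_ereal) \<longlongrightarrow> 0) (at_left \<infinity>)"
      using liminf unfolding ereal_tendsto_simps1 .
  qed (use si in auto)
  then have "(LINT x:{0<..}|lborel. f x) = 0"
    by (simp add: interval_lebesgue_integral_0_infty)
  then have "integral {0<..} f = 0"
    using set_borel_integral_eq_integral(2)[OF abs_to_lborel[OF fcont fabs]] by simp
  moreover have "integral {0<..} f = y * (Jf al be 2 y + Jf al be 1 y) + al * Jf al be 1 y + (al - be) * Jf al be 0 y"
  proof -
    have i: "jint al be k y integrable_on {0<..}" for k by (rule jint_int[OF al0 al1 be0 y])
    have i2: "(\<lambda>t. c * jint al be k y t) integrable_on {0<..}" for c k
      by (rule integrable_on_mult_right[OF i])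
    have "integral {0<..} f = y * Jf al be 2 y + y * Jf al be 1 y + al * Jf al be 1 y + (al - be) * Jf al be 0 y"
      unfolding f_def Jf_def
      by (simp add: integral_add i2 integrable_add del: integral_mult_right) simp
    then show ?thesis by (simp add: algebra_simps)
  qed
  ultimately show ?thesis by simp
qed

end

definition kc :: "real \<Rightarrow> real \<Rightarrow> nat \<Rightarrow> real" where
  "kc al be k = pochhammer be k / pochhammer al k / fact k"

lemma kummerM_eq: "kummerM be al y = (\<Sum>k. kc al be k * y ^ k)"
  unfolding kummerM_def kc_def by (simp add: field_simps)

context
  fixes al be :: real
  assumes al0: "0 < al" and al1: "al < 1" and be0: "be \<le> 0"
begin

lemma kc_Suc: "kc al be (Suc k) = kc al be k * (be + k) / ((al + k) * (Suc k))"
proof -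
  have "pochhammer al k > 0" using al0 by (rule pochhammer_pos)
  moreover have "al + k > 0" using al0 by simp
  ultimately show ?thesis unfolding kc_def pochhammer_Suc fact_Suc
    by (simp add: field_simps)
qed

lemma kc_rec: "(al + k) * (Suc k) * kc al be (Suc k) = (be + k) * kc al be k"
proof -
  have "(al + k) * real (Suc k) \<noteq> 0" using al0 by simp
  then show ?thesis unfolding kc_Suc by (simp add: mult.commute)
qed

lemma kc_summable: "summable (\<lambda>k. kc al be k * y ^ k)"
proof (rule summable_ratio_test[where c = "1/2" and N = "nat \<lceil>2 * (\<bar>be\<bar> + 1) * \<bar>y\<bar> / al\<rceil>"])
  fix n assume n: "nat \<lceil>2 * (\<bar>be\<bar> + 1) * \<bar>y\<bar> / al\<rceil> \<le> n"
  have "2 * (\<bar>be\<bar> + 1) * \<bar>y\<bar> / al \<le> n" using n by linarith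
  then have h1: "2 * (\<bar>be\<bar> + 1) * \<bar>y\<bar> \<le> al * (n + 1)" using al0 by (simp add: field_simps)
  have h2: "\<bar>be + n\<bar> \<le> (\<bar>be\<bar> + 1) * (n + 1)" by (simp add: algebra_simps abs_triangle_ineq[THEN order_trans])
  have h3: "al * (n + 1) \<le> al + n" using al1 al0 by (simp add: algebra_simps mult_left_le_one_le)
  have pos: "(al + n) * (Suc n) > 0" using al0 by simp
  have "2 * (\<bar>be + n\<bar> * \<bar>y\<bar>) \<le> 2 * ((\<bar>be\<bar> + 1) * (n + 1) * \<bar>y\<bar>)"
    using h2 by (simp add: mult_right_mono)
  also have "\<dots> = (2 * (\<bar>be\<bar> + 1) * \<bar>y\<bar>) * (n + 1)" by simp
  also have "\<dots> \<le> (al * (n + 1)) * (n + 1)" using h1 by (intro mult_right_mono) auto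
  also have "\<dots> \<le> (al + n) * (n + 1)" using h3 by (intro mult_right_mono) auto
  finally have ratio: "\<bar>be + n\<bar> * \<bar>y\<bar> / ((al + n) * Suc n) \<le> 1 / 2"
    using pos by (simp add: field_simps)
  have "kc al be (Suc n) * y ^ Suc n = ((be + n) * y / ((al + n) * Suc n)) * (kc al be n * y ^ n)"
    unfolding kc_Suc by (simp add: field_simps)
  then have "norm (kc al be (Suc n) * y ^ Suc n) =
      (\<bar>be + n\<bar> * \<bar>y\<bar> / ((al + n) * Suc n)) * norm (kc al be n * y ^ n)"
    using pos al0 by (simp add: abs_mult abs_divide del: of_nat_Suc)
  also have "\<dots> \<le> 1 / 2 * norm (kc al be n * y ^ n)"
    by (intro mult_right_mono ratio) auto
  finally show "norm (kc al be (Suc n) * y ^ Suc n) \<le> 1 / 2 * norm (kc al be n * y ^ n)" .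
qed simp

lemma kc1_summable: "summable (\<lambda>k. diffs (kc al be) k * y ^ k)"
  by (rule termdiff_converges_all[OF kc_summable])

lemma kc2_summable: "summable (\<lambda>k. diffs (diffs (kc al be)) k * y ^ k)"
  by (rule termdiff_converges_all[OF kc1_summable])

lemma M_deriv: "((\<lambda>y. \<Sum>k. kc al be k * y ^ k) has_real_derivative (\<Sum>k. diffs (kc al be) k * y ^ k)) (at y)"
  by (rule termdiffs_strong_converges_everywhere[OF kc_summable])

lemma M1_deriv: "((\<lambda>y. \<Sum>k. diffs (kc al be) k * y ^ k) has_real_derivative (\<Sum>k. diffs (diffs (kc al be)) k * y ^ k)) (at y)"
  by (rule termdiffs_strong_converges_everywhere[OF kc1_summable])

lemma M_ode:
  "y * (\<Sum>k. diffs (diffs (kc al be)) k * y ^ k) + (al - y) * (\<Sum>k. diffs (kc al be) k * y ^ k)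
     - be * (\<Sum>k. kc al be k * y ^ k) = 0"
proof -
  define c where "c = kc al be"
  define d where "d = diffs c"
  define M0 where "M0 = (\<Sum>k. c k * y ^ k)"
  define M1 where "M1 = (\<Sum>k. d k * y ^ k)"
  define M2 where "M2 = (\<Sum>k. diffs d k * y ^ k)"
  have s0: "(\<lambda>k. c k * y ^ k) sums M0" unfolding M0_def c_def using kc_summable by (simp add: summable_sums)
  have s1: "(\<lambda>k. d k * y ^ k) sums M1" unfolding M1_def d_def c_def using kc1_summable by (simp add: summable_sums)
  have s2: "(\<lambda>k. diffs d k * y ^ k) sums M2" unfolding M2_def d_def c_def using kc2_summable by (simp add: summable_sums)
  have "(\<lambda>k. y * (diffs d k * y ^ k)) sums (y * M2)" by (rule sums_mult[OF s2])
  then have "(\<lambda>k. (\<lambda>m. real m * d m * y ^ m) (Suc k)) sums (y * M2)"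
    by (simp add: diffs_def algebra_simps)
  then have t2: "(\<lambda>m. real m * d m * y ^ m) sums (y * M2)"
    by (subst (asm) sums_Suc_iff) simp
  have "(\<lambda>k. y * (d k * y ^ k)) sums (y * M1)" by (rule sums_mult[OF s1])
  then have "(\<lambda>k. (\<lambda>m. real m * c m * y ^ m) (Suc k)) sums (y * M1)"
    by (simp add: d_def diffs_def algebra_simps)
  then have t1: "(\<lambda>m. real m * c m * y ^ m) sums (y * M1)"
    by (subst (asm) sums_Suc_iff) simp
  have "(\<lambda>m. real m * d m * y ^ m + al * (d m * y ^ m) - real m * c m * y ^ m - be * (c m * y ^ m))
        sums (y * M2 + al * M1 - y * M1 - be * M0)"
    by (intro sums_diff sums_add t2 t1 sums_mult s1 s0)
  moreover have "real m * d m * y ^ m + al * (d m * y ^ m) - real m * c m * y ^ m - be * (c m * y ^ m) = 0" for m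
  proof -
    have e: "(al + m) * (Suc m) * c (Suc m) - (be + m) * c m = 0" unfolding c_def using kc_rec by simp
    have "real m * d m * y ^ m + al * (d m * y ^ m) - real m * c m * y ^ m - be * (c m * y ^ m)
       = y ^ m * ((al + m) * (Suc m) * c (Suc m) - (be + m) * c m)"
      unfolding d_def diffs_def by (simp add: algebra_simps)
    then show ?thesis using e by simp
  qed
  ultimately have "(\<lambda>m. 0) sums (y * M2 + al * M1 - y * M1 - be * M0)" by simp
  then have "y * M2 + al * M1 - y * M1 - be * M0 = 0" using sums_zero sums_unique2 by blast
  then show ?thesis unfolding M0_def M1_def M2_def d_def c_def by (simp add: algebra_simps)
qed

end

context
  fixes al be :: real
  assumes al0: "0 < al" and al1: "al < 1" and be0: "be \<le> 0"
begin

lemma pw1: assumes t: "t > 0" shows "(1 + t) powr (be - 1) \<le> t powr (al / 2 - (al - be))"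
proof (cases "t \<le> 1")
  case True
  have "(1 + t) powr (be - 1) \<le> (1 + t) powr 0" using t be0 by (intro powr_mono) auto
  also have "\<dots> = t powr 0" using t by simp
  also have "\<dots> \<le> t powr (al / 2 - (al - be))" using True t al0 be0 by (intro powr_mono') auto
  finally show ?thesis .
next
  case False
  have "(1 + t) powr (be - 1) \<le> t powr (be - 1)" using t be0 by (intro powr_mono2') auto
  also have "\<dots> \<le> t powr (al / 2 - (al - be))" using False al1 by (intro powr_mono) auto
  finally show ?thesis .
qed

lemma pw2: assumes t: "t > 0" shows "t powr (be - 1) - (1 + t) powr (be - 1) \<le> (1 - be) * t powr (be - 1 - al / 2)"
proof (cases "t \<le> 1")
  case True
  have "t powr (be - 1) - (1 + t) powr (be - 1) \<le> t powr (be - 1)" by simp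
  also have "\<dots> \<le> t powr (be - 1 - al / 2)" using True t al0 by (intro powr_mono') auto
  also have "\<dots> \<le> (1 - be) * t powr (be - 1 - al / 2)"
    using be0 mult_right_mono[of 1 "1 - be" "t powr (be - 1 - al / 2)"] by simp
  finally show ?thesis .
next
  case False
  have "norm (t powr (be - 1) - (1 + t) powr (be - 1)) \<le> ((1 - be) * t powr (be - 2)) * norm (t - (1 + t))"
  proof (rule field_differentiable_bound[of "{t..1+t}" "\<lambda>s. s powr (be - 1)" "\<lambda>s. (be - 1) * s powr (be - 1 - 1)"])
    show "convex {t..1 + t}" by simp
    show "((\<lambda>s. s powr (be - 1)) has_field_derivative (be - 1) * s powr (be - 1 - 1)) (at s within {t..1 + t})"
      if "s \<in> {t..1+t}" for s
      using that t by (intro has_field_derivative_at_within[OF has_real_derivative_powr]) auto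
    show "norm ((be - 1) * s powr (be - 1 - 1)) \<le> (1 - be) * t powr (be - 2)" if "s \<in> {t..1+t}" for s
    proof -
      have "s powr (be - 2) \<le> t powr (be - 2)" using that t be0 by (intro powr_mono2') auto
      then show ?thesis using be0 by (simp add: abs_mult mult_left_mono)
    qed
  qed (use t in auto)
  then have "t powr (be - 1) - (1 + t) powr (be - 1) \<le> (1 - be) * t powr (be - 2)" by simp
  also have "\<dots> \<le> (1 - be) * t powr (be - 1 - al / 2)"
    using False al1 be0 by (intro mult_left_mono powr_mono) auto
  finally show ?thesis .
qed

lemma J0_bounds:
  assumes x: "x > 0"
  shows "0 \<le> Jf al be 0 (- x)" "Jf al be 0 (- x) \<le> Gamma (al / 2) / x powr (al / 2)"
proof -
  have i: "jint al be 0 (- x) integrable_on {0<..}" using x by (intro jint_int[OF al0 al1 be0]) auto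
  show "0 \<le> Jf al be 0 (- x)" unfolding Jf_def
    by (rule integral_nonneg[OF i]) (simp add: jint_def)
  have g: "((\<lambda>t. t powr (al / 2 - 1) * exp (- x * t)) has_integral Gamma (al / 2) / x powr (al / 2)) {0<..}"
    using al0 x by (intro gamma_scaled) auto
  have "Jf al be 0 (- x) \<le> integral {0<..} (\<lambda>t. t powr (al / 2 - 1) * exp (- x * t))"
    unfolding Jf_def
  proof (rule integral_le[OF i])
    show "(\<lambda>t. t powr (al / 2 - 1) * exp (- x * t)) integrable_on {0<..}" using g by blast
    fix t :: real assume "t \<in> {0<..}"
    then have t: "t > 0" by simp
    have "jint al be 0 (- x) t = exp (- x * t) * t powr (al - be - 1) * (1 + t) powr (be - 1)"
      by (simp add: jint_def)
    also have "\<dots> \<le> exp (- x * t) * t powr (al - be - 1) * t powr (al / 2 - (al - be))"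
      using pw1[OF t] by (intro mult_left_mono) auto
    also have "\<dots> = t powr (al / 2 - 1) * exp (- x * t)"
      by (simp add: powr_add[symmetric])
    finally show "jint al be 0 (- x) t \<le> t powr (al / 2 - 1) * exp (- x * t)" .
  qed
  then show "Jf al be 0 (- x) \<le> Gamma (al / 2) / x powr (al / 2)"
    using integral_unique[OF g] by simp
qed

lemma J1_bounds:
  assumes x: "x > 0"
  shows "Jf al be 1 (- x) \<le> Gamma al / x powr al"
    "Gamma al / x powr al - (1 - be) * (Gamma (al / 2) / x powr (al / 2)) \<le> Jf al be 1 (- x)"
proof -
  have i: "jint al be 1 (- x) integrable_on {0<..}" using x by (intro jint_int[OF al0 al1 be0]) auto
  have g: "((\<lambda>t. t powr (al - 1) * exp (- x * t)) has_integral Gamma al / x powr al) {0<..}"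
    using al0 x by (intro gamma_scaled) auto
  have g2: "((\<lambda>t. t powr (al / 2 - 1) * exp (- x * t)) has_integral Gamma (al / 2) / x powr (al / 2)) {0<..}"
    using al0 x by (intro gamma_scaled) auto
  have e: "t * t powr (al - be - 1) = t powr (al - be)" if "t > 0" for t
  proof -
    have "t powr (al - be) = t powr (1 + (al - be - 1))" by simp
    also have "\<dots> = t powr 1 * t powr (al - be - 1)" by (rule powr_add)
    finally show ?thesis using that by simp
  qed
  have "Jf al be 1 (- x) \<le> integral {0<..} (\<lambda>t. t powr (al - 1) * exp (- x * t))"
    unfolding Jf_def
  proof (rule integral_le[OF i])
    show "(\<lambda>t. t powr (al - 1) * exp (- x * t)) integrable_on {0<..}" using g by blast
    fix t :: real assume "t \<in> {0<..}"
    then have t: "t > 0" by simp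
    have "jint al be 1 (- x) t = exp (- x * t) * t powr (al - be) * (1 + t) powr (be - 1)"
      using e[OF t] by (simp add: jint_def algebra_simps)
    also have "\<dots> \<le> exp (- x * t) * t powr (al - be) * t powr (be - 1)"
      using t be0 by (intro mult_left_mono powr_mono2') auto
    also have "\<dots> = t powr (al - 1) * exp (- x * t)"
      by (simp add: powr_add[symmetric])
    finally show "jint al be 1 (- x) t \<le> t powr (al - 1) * exp (- x * t)" .
  qed
  then show "Jf al be 1 (- x) \<le> Gamma al / x powr al"
    using integral_unique[OF g] by simp
  have "integral {0<..} (\<lambda>t. t powr (al - 1) * exp (- x * t) - (1 - be) * (t powr (al / 2 - 1) * exp (- x * t)))
        \<le> Jf al be 1 (- x)"
    unfolding Jf_def
  proof (rule integral_le[OF _ i])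
    show "(\<lambda>t. t powr (al - 1) * exp (- x * t) - (1 - be) * (t powr (al / 2 - 1) * exp (- x * t))) integrable_on {0<..}"
      using g g2 by (intro integrable_diff integrable_on_mult_right) blast+
    fix t :: real assume "t \<in> {0<..}"
    then have t: "t > 0" by simp
    have "t powr (al - 1) * exp (- x * t) - jint al be 1 (- x) t
        = exp (- x * t) * t powr (al - be) * (t powr (be - 1) - (1 + t) powr (be - 1))"
      using e[OF t] by (simp add: jint_def algebra_simps powr_add[symmetric])
    also have "\<dots> \<le> exp (- x * t) * t powr (al - be) * ((1 - be) * t powr (be - 1 - al / 2))"
      using pw2[OF t] by (intro mult_left_mono) auto
    also have "\<dots> = (1 - be) * (t powr (al / 2 - 1) * exp (- x * t))"
      by (simp add: powr_add[symmetric] algebra_simps)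
    finally show "t powr (al - 1) * exp (- x * t) - (1 - be) * (t powr (al / 2 - 1) * exp (- x * t))
        \<le> jint al be 1 (- x) t" by simp
  qed
  moreover have "integral {0<..} (\<lambda>t. t powr (al - 1) * exp (- x * t) - (1 - be) * (t powr (al / 2 - 1) * exp (- x * t)))
      = Gamma al / x powr al - (1 - be) * (Gamma (al / 2) / x powr (al / 2))"
    using g g2 by (intro integral_unique has_integral_diff has_integral_mult_right)
  ultimately show "Gamma al / x powr al - (1 - be) * (Gamma (al / 2) / x powr (al / 2)) \<le> Jf al be 1 (- x)"
    by simp
qed

lemma lim_J0: "((\<lambda>y. (- y) powr al * Jf al be 0 y) \<longlongrightarrow> 0) (at_left 0)"
proof -
  have "((\<lambda>x. x powr al * Jf al be 0 (- x)) \<longlongrightarrow> 0) (at_right 0)"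
  proof (rule tendsto_sandwich[of "\<lambda>_. 0" _ _ "\<lambda>x. Gamma (al / 2) * x powr (al / 2)"])
    show "\<forall>\<^sub>F x in at_right 0. 0 \<le> x powr al * Jf al be 0 (- x)"
      using eventually_at_right_less[of 0] by eventually_elim (use J0_bounds in simp)
    show "\<forall>\<^sub>F x in at_right 0. x powr al * Jf al be 0 (- x) \<le> Gamma (al / 2) * x powr (al / 2)"
      using eventually_at_right_less[of 0]
    proof eventually_elim
      case (elim x)
      then have x: "x > 0" by simp
      have "x powr al * Jf al be 0 (- x) \<le> x powr al * (Gamma (al / 2) / x powr (al / 2))"
        using J0_bounds(2)[OF x] by (intro mult_left_mono) auto
      also have "\<dots> = Gamma (al / 2) * (x powr al / x powr (al / 2))" by simp
      also have "x powr al / x powr (al / 2) = x powr (al / 2)"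
        by (simp add: powr_diff[symmetric])
      finally show ?case by simp
    qed
    show "((\<lambda>x. Gamma (al / 2) * x powr (al / 2)) \<longlongrightarrow> 0) (at_right 0)"
      using al0 by real_asymp
  qed simp
  then show ?thesis unfolding filterlim_at_left_to_right[of _ _ 0] by simp
qed

lemma lim_J1: "((\<lambda>y. (- y) powr al * Jf al be 1 y) \<longlongrightarrow> Gamma al) (at_left 0)"
proof -
  have "((\<lambda>x. x powr al * Jf al be 1 (- x)) \<longlongrightarrow> Gamma al) (at_right 0)"
  proof (rule tendsto_sandwich[of "\<lambda>x. Gamma al - (1 - be) * Gamma (al / 2) * x powr (al / 2)" _ _ "\<lambda>_. Gamma al"])
    show "\<forall>\<^sub>F x in at_right 0. Gamma al - (1 - be) * Gamma (al / 2) * x powr (al / 2) \<le> x powr al * Jf al be 1 (- x)"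
      using eventually_at_right_less[of 0]
    proof eventually_elim
      case (elim x)
      then have x: "x > 0" by simp
      have p: "x powr al > 0" using x by simp
      have "x powr al * (Gamma al / x powr al - (1 - be) * (Gamma (al / 2) / x powr (al / 2)))
          \<le> x powr al * Jf al be 1 (- x)"
        using J1_bounds(2)[OF x] p by (intro mult_left_mono) auto
      moreover have "x powr al * (Gamma al / x powr al - (1 - be) * (Gamma (al / 2) / x powr (al / 2)))
          = Gamma al - (1 - be) * Gamma (al / 2) * (x powr al / x powr (al / 2))"
        using p by (simp add: field_simps)
      moreover have "x powr al / x powr (al / 2) = x powr (al / 2)"
        by (simp add: powr_diff[symmetric])
      ultimately show ?case by simp
    qed
    show "\<forall>\<^sub>F x in at_right 0. x powr al * Jf al be 1 (- x) \<le> Gamma al"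
      using eventually_at_right_less[of 0]
    proof eventually_elim
      case (elim x)
      then have x: "x > 0" by simp
      have p: "x powr al > 0" using x by simp
      have "x powr al * Jf al be 1 (- x) \<le> x powr al * (Gamma al / x powr al)"
        using J1_bounds(1)[OF x] p by (intro mult_left_mono) auto
      then show ?case using p by simp
    qed
    have "((\<lambda>x. Gamma al - (1 - be) * Gamma (al / 2) * x powr (al / 2)) \<longlongrightarrow> Gamma al - (1 - be) * Gamma (al / 2) * 0) (at_right 0)"
      using al0 by (intro tendsto_intros) real_asymp
    then show "((\<lambda>x. Gamma al - (1 - be) * Gamma (al / 2) * x powr (al / 2)) \<longlongrightarrow> Gamma al) (at_right 0)"
      by simp
  qed simp
  then show ?thesis unfolding filterlim_at_left_to_right[of _ _ 0] by simp
qed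

end

definition Mf :: "real \<Rightarrow> real \<Rightarrow> real \<Rightarrow> real" where "Mf al be y = (\<Sum>k. kc al be k * y ^ k)"
definition M1 :: "real \<Rightarrow> real \<Rightarrow> real \<Rightarrow> real" where "M1 al be y = (\<Sum>k. diffs (kc al be) k * y ^ k)"
definition M2 :: "real \<Rightarrow> real \<Rightarrow> real \<Rightarrow> real" where "M2 al be y = (\<Sum>k. diffs (diffs (kc al be)) k * y ^ k)"
definition Tf :: "real \<Rightarrow> real \<Rightarrow> real \<Rightarrow> real" where "Tf al be y = exp y / Gamma (al - be) * Jf al be 0 y"
definition T1 :: "real \<Rightarrow> real \<Rightarrow> real \<Rightarrow> real" where "T1 al be y = exp y / Gamma (al - be) * (Jf al be 0 y + Jf al be 1 y)"
definition T2 :: "real \<Rightarrow> real \<Rightarrow> real \<Rightarrow> real" where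
  "T2 al be y = exp y / Gamma (al - be) * (Jf al be 0 y + 2 * Jf al be 1 y + Jf al be 2 y)"
definition Wr :: "real \<Rightarrow> real \<Rightarrow> real \<Rightarrow> real" where
  "Wr al be y = Mf al be y * T1 al be y - M1 al be y * Tf al be y"

definition Vf :: "real \<Rightarrow> real \<Rightarrow> real \<Rightarrow> real" where "Vf al be y = Wr al be y * (- y) powr al * exp (- y)"

context
  fixes al be :: real
  assumes al0: "0 < al" and al1: "al < 1" and be0: "be \<le> 0"
begin

lemma gne: "Gamma (al - be) \<noteq> 0"
proof -
  have "al - be > 0" using al0 be0 by simp
  then have "Gamma (al - be) > 0" by (rule Gamma_real_pos)
  then show ?thesis by simp
qed

lemma Mf_deriv: "(Mf al be has_real_derivative M1 al be y) (at y)"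
  unfolding Mf_def M1_def using M_deriv[OF al0 al1 be0] by simp

lemma M1f_deriv: "(M1 al be has_real_derivative M2 al be y) (at y)"
  unfolding M2_def M1_def using M1_deriv[OF al0 al1 be0] by simp

lemma Mf_ode: "y * M2 al be y + (al - y) * M1 al be y - be * Mf al be y = 0"
  unfolding M2_def M1_def Mf_def using M_ode[OF al0 al1 be0] by simp

lemma Tf_deriv: "y < 0 \<Longrightarrow> (Tf al be has_real_derivative T1 al be y) (at y)"
  unfolding Tf_def T1_def
  using gne by (auto intro!: derivative_eq_intros Jf_deriv[OF al0 al1 be0] simp: field_simps)

lemma T1f_deriv: "y < 0 \<Longrightarrow> (T1 al be has_real_derivative T2 al be y) (at y)"
  unfolding T2_def T1_def
  using gne by (auto intro!: derivative_eq_intros Jf_deriv[OF al0 al1 be0] simp: field_simps numeral_2_eq_2)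

lemma Tf_ode: "y < 0 \<Longrightarrow> y * T2 al be y + (al - y) * T1 al be y - be * Tf al be y = 0"
proof -
  assume y: "y < 0"
  have "y * T2 al be y + (al - y) * T1 al be y - be * Tf al be y =
    exp y / Gamma (al - be) * (y * (Jf al be 2 y + Jf al be 1 y) + al * Jf al be 1 y + (al - be) * Jf al be 0 y)"
    unfolding T2_def T1_def Tf_def using gne by (simp add: field_simps)
  also have "\<dots> = 0" using ibp[OF al0 al1 be0 y] by simp
  finally show ?thesis .
qed

lemma Wr_deriv: "y < 0 \<Longrightarrow> (Wr al be has_real_derivative (Mf al be y * T2 al be y - M2 al be y * Tf al be y)) (at y)"
  unfolding Wr_def
  by (auto intro!: derivative_eq_intros Mf_deriv M1f_deriv Tf_deriv T1f_deriv simp: algebra_simps)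

lemma Wr_ode: "y < 0 \<Longrightarrow> y * (Mf al be y * T2 al be y - M2 al be y * Tf al be y) = - (al - y) * Wr al be y"
proof -
  assume y: "y < 0"
  have a: "y * T2 al be y = be * Tf al be y - (al - y) * T1 al be y" using Tf_ode[OF y] by simp
  have b: "y * M2 al be y = be * Mf al be y - (al - y) * M1 al be y" using Mf_ode[of y] by simp
  have "y * (Mf al be y * T2 al be y - M2 al be y * Tf al be y)
      = Mf al be y * (y * T2 al be y) - Tf al be y * (y * M2 al be y)" by (simp add: algebra_simps)
  also have "\<dots> = - (al - y) * Wr al be y" unfolding a b Wr_def by (simp add: algebra_simps)
  finally show ?thesis .
qed


lemma Vf_deriv0: assumes y: "y < 0" shows "(Vf al be has_real_derivative 0) (at y)"
proof -
  define W' where "W' = Mf al be y * T2 al be y - M2 al be y * Tf al be y"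
  define q where "q = (- y) powr (al - 1)"
  have P: "(- y) powr al = (- y) * q"
  proof -
    have "(- y) powr al = (- y) powr (1 + (al - 1))" by simp
    also have "\<dots> = (- y) powr 1 * (- y) powr (al - 1)" by (rule powr_add)
    finally show ?thesis using y by (simp add: q_def)
  qed
  have d: "(Vf al be has_real_derivative
      W' * (- y) powr al * exp (- y) + Wr al be y * (al * q * (- 1)) * exp (- y)
      + Wr al be y * (- y) powr al * (exp (- y) * (- 1))) (at y)"
    unfolding Vf_def q_def W'_def using y
    by (auto intro!: derivative_eq_intros Wr_deriv[OF y] has_real_derivative_powr
             DERIV_chain2[where f = "\<lambda>u. u powr al"] simp: algebra_simps)
  have "W' * (- y) powr al * exp (- y) + Wr al be y * (al * q * (- 1)) * exp (- y)
      + Wr al be y * (- y) powr al * (exp (- y) * (- 1))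
      = q * exp (- y) * (- (y * W') - al * Wr al be y + y * Wr al be y)"
    unfolding P by (simp add: algebra_simps)
  also have "\<dots> = 0" using Wr_ode[OF y] unfolding W'_def by (simp add: algebra_simps)
  finally show ?thesis using d by simp
qed

end

context
  fixes al be :: real
  assumes al0: "0 < al" and al1: "al < 1" and be0: "be \<le> 0"
begin

lemma Mf0: "Mf al be 0 = 1"
  unfolding Mf_def powser_zero kc_def by simp

lemma ev_neg: "\<forall>\<^sub>F y in at_left (0::real). y < 0"
proof -
  have "\<forall>\<^sub>F x in at_left (0::real). x \<in> {-1<..<0}" by (rule eventually_at_left_real) simp
  then show ?thesis by eventually_elim auto
qed

lemma Vf_lim: "(Vf al be \<longlongrightarrow> Gamma al / Gamma (al - be)) (at_left 0)"
proof -
  have c1: "isCont (Mf al be) 0" by (rule DERIV_isCont[OF Mf_deriv[OF al0 al1 be0]])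
  have c2: "isCont (M1 al be) 0" by (rule DERIV_isCont[OF M1f_deriv[OF al0 al1 be0]])
  have l1: "(Mf al be \<longlongrightarrow> 1) (at_left 0)"
    using c1 Mf0 by (metis isCont_def filterlim_at_split)
  have l2: "(M1 al be \<longlongrightarrow> M1 al be 0) (at_left 0)"
    using c2 by (metis isCont_def filterlim_at_split)
  have L: "((\<lambda>y. (Mf al be y * ((- y) powr al * Jf al be 0 y + (- y) powr al * Jf al be 1 y)
        - M1 al be y * ((- y) powr al * Jf al be 0 y)) / Gamma (al - be))
     \<longlongrightarrow> (1 * (0 + Gamma al) - M1 al be 0 * 0) / Gamma (al - be)) (at_left 0)"
    by (intro tendsto_intros l1 l2 lim_J0[OF al0 al1 be0] lim_J1[OF al0 al1 be0]) (use gne[OF al0 al1 be0] in simp)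
  have E: "\<forall>\<^sub>F y in at_left 0. (Mf al be y * ((- y) powr al * Jf al be 0 y + (- y) powr al * Jf al be 1 y)
        - M1 al be y * ((- y) powr al * Jf al be 0 y)) / Gamma (al - be) = Vf al be y"
    using ev_neg 
  proof eventually_elim
    case (elim y)
    show ?case unfolding Vf_def Wr_def T1_def Tf_def using gne[OF al0 al1 be0]
      by (simp add: field_simps exp_minus)
  qed
  have L': "((\<lambda>y. (Mf al be y * ((- y) powr al * Jf al be 0 y + (- y) powr al * Jf al be 1 y)
        - M1 al be y * ((- y) powr al * Jf al be 0 y)) / Gamma (al - be)) \<longlongrightarrow> Gamma al / Gamma (al - be)) (at_left 0)"
    using L by simp
  show ?thesis using iffD1[OF tendsto_cong[OF E] L'] .
qed

lemma Wr_formula: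
  assumes y: "y < 0"
  shows "Wr al be y = Gamma al / Gamma (al - be) * (- y) powr (- al) * exp y"
proof -
  have "Vf al be constant_on {..<0}"
    by (rule has_field_derivative_0_imp_constant_on[OF Vf_deriv0[OF al0 al1 be0]]) auto
  then obtain c where c: "\<And>u. u \<in> {..<0} \<Longrightarrow> Vf al be u = c" unfolding constant_on_def by blast
  have ev: "\<forall>\<^sub>F u in at_left 0. c = Vf al be u"
    using ev_neg by eventually_elim (use c in auto)
  have "((\<lambda>_. c) \<longlongrightarrow> Gamma al / Gamma (al - be)) (at_left (0::real))"
    using iffD2[OF tendsto_cong[OF ev] Vf_lim] .
  then have "c = Gamma al / Gamma (al - be)"
    by (intro tendsto_unique[of "at_left (0::real)"]) auto
  with c[of y] y have V: "Wr al be y * (- y) powr al * exp (- y) = Gamma al / Gamma (al - be)"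
    by (simp add: Vf_def)
  have m: "(- y) powr (- al) = inverse ((- y) powr al)" by (simp add: powr_minus)
  have p: "(- y) powr al > 0" using y by simp
  have "Wr al be y = (Wr al be y * (- y) powr al * exp (- y)) * (inverse ((- y) powr al) * exp y)"
    using p by (simp add: exp_minus field_simps)
  also have "\<dots> = Gamma al / Gamma (al - be) * (- y) powr (- al) * exp y"
    unfolding V m by simp
  finally show ?thesis .
qed

end

lemma main_gen:
  fixes n j :: nat and al be z :: real
  assumes al0: "0 < al" and al1: "al < 1" and be0: "be \<le> 0"
    and n: "n \<ge> 2" and j: "j > 0" and aln: "al = 1 - 1 / real n" and z: "z > 0"
  defines "G \<equiv> (\<lambda>z::real. exp (real j * z ^ n / 2) * kummerM be al (- real j * z ^ n))"
    and "D \<equiv> (\<lambda>z::real. exp (real j * z ^ n / 2) * kummerT be al (- real j * z ^ n))"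
  shows "G z * deriv D z - deriv G z * D z = Gamma (al - 1) / Gamma (al - be) * real j powr (1 / real n)"
proof -
  define E where "E z = exp (real j * z ^ n / 2)" for z
  define g where "g z = - real j * z ^ n" for z
  define E' where "E' = exp (real j * z ^ n / 2) * (real j * (real n * z ^ (n - 1)) / 2)"
  define g' where "g' = - real j * (real n * z ^ (n - 1))"
  have gz: "g z < 0" using z j by (simp add: g_def)
  have Geq: "G = (\<lambda>z. E z * Mf al be (g z))"
    unfolding G_def E_def g_def Mf_def kummerM_eq by simp
  have Deq: "D = (\<lambda>z. E z * Tf al be (g z))"
    unfolding D_def E_def g_def Tf_def Jf_def jint_def kummerT_def by simp
  have hE: "(E has_real_derivative E') (at z)"
    unfolding E_def E'_def by (auto intro!: derivative_eq_intros simp: algebra_simps)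
  have hg: "(g has_real_derivative g') (at z)"
    unfolding g_def g'_def by (auto intro!: derivative_eq_intros simp: algebra_simps)
  have hM: "((\<lambda>z. Mf al be (g z)) has_real_derivative M1 al be (g z) * g') (at z)"
    by (rule DERIV_chain2[OF Mf_deriv[OF al0 al1 be0] hg])
  have hT: "((\<lambda>z. Tf al be (g z)) has_real_derivative T1 al be (g z) * g') (at z)"
    by (rule DERIV_chain2[OF Tf_deriv[OF al0 al1 be0 gz] hg])
  have dG: "deriv G z = E' * Mf al be (g z) + E z * (M1 al be (g z) * g')"
  proof -
    have "((\<lambda>z. E z * Mf al be (g z)) has_real_derivative (E' * Mf al be (g z) + E z * (M1 al be (g z) * g'))) (at z)"
      using DERIV_mult[OF hE hM] by (simp add: algebra_simps)
    then show ?thesis unfolding Geq by (rule DERIV_imp_deriv)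
  qed
  have dD: "deriv D z = E' * Tf al be (g z) + E z * (T1 al be (g z) * g')"
  proof -
    have "((\<lambda>z. E z * Tf al be (g z)) has_real_derivative (E' * Tf al be (g z) + E z * (T1 al be (g z) * g'))) (at z)"
      using DERIV_mult[OF hE hT] by (simp add: algebra_simps)
    then show ?thesis unfolding Deq by (rule DERIV_imp_deriv)
  qed
  have "G z * deriv D z - deriv G z * D z = E z * E z * g' * Wr al be (g z)"
    unfolding dG dD unfolding Geq Deq Wr_def by (simp add: algebra_simps)
  also have "Wr al be (g z) = Gamma al / Gamma (al - be) * (real j * z ^ n) powr (- al) * exp (- (real j * z ^ n))"
    using Wr_formula[OF al0 al1 be0 gz] by (simp add: g_def)
  also have "E z * E z = exp (real j * z ^ n)"
    unfolding E_def mult_exp_exp by simp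
  finally have R: "G z * deriv D z - deriv G z * D z =
      - real n * Gamma al / Gamma (al - be) * (real j * z ^ (n - 1) * (real j * z ^ n) powr (- al))"
    unfolding g'_def by (simp add: exp_minus field_simps)
  have n1: "real n \<ge> 2" using n by simp
  have nal: "real n * al = real n - 1" using n1 unfolding aln by (simp add: field_simps)
  have P: "real j * z ^ (n - 1) * (real j * z ^ n) powr (- al) = real j powr (1 / real n)"
  proof -
    have jp: "real j > 0" using j by simp
    have "(real j * z ^ n) powr (- al) = real j powr (- al) * (z ^ n) powr (- al)"
      using jp z by (simp add: powr_mult)
    also have "(z ^ n) powr (- al) = z powr (real n * (- al))"
      using z by (simp add: powr_powr powr_realpow[symmetric])
    also have "real n * (- al) = - (real n - 1)" using nal by simp
    finally have a: "(real j * z ^ n) powr (- al) = real j powr (- al) * z powr (- (real n - 1))" .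
    have b: "z ^ (n - 1) = z powr (real n - 1)"
      using z n by (simp add: powr_realpow[symmetric] of_nat_diff)
    have c: "z powr (real n - 1) * z powr (- (real n - 1)) = 1"
      using z by (simp add: powr_add[symmetric])
    have d: "real j * real j powr (- al) = real j powr (1 / real n)"
    proof -
      have "real j * real j powr (- al) = real j powr 1 * real j powr (- al)" using jp by simp
      also have "\<dots> = real j powr (1 + - al)" by (rule powr_add[symmetric])
      also have "1 + - al = 1 / real n" unfolding aln by simp
      finally show ?thesis .
    qed
    have "real j * z ^ (n - 1) * (real j * z ^ n) powr (- al)
        = (real j * real j powr (- al)) * (z powr (real n - 1) * z powr (- (real n - 1)))"
      unfolding a b by (simp add: algebra_simps)
    then show ?thesis unfolding c d by simp
  qed
  have Gm: "Gamma (al - 1) = - real n * Gamma al"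
  proof -
    have ni: "al - 1 \<notin> \<int>\<^sub>\<le>\<^sub>0"
    proof
      assume "al - 1 \<in> \<int>\<^sub>\<le>\<^sub>0"
      then obtain k :: nat where k: "al - 1 = - real k" by (auto elim!: nonpos_Ints_cases')
      show False
      proof (cases k)
        case 0 then show False using k al1 by simp
      next
        case (Suc m) then show False using k al0 by simp
      qed
    qed
    have "Gamma (al - 1 + 1) = (al - 1) * Gamma (al - 1)" by (rule Gamma_plus1[OF ni])
    then have "Gamma al = (- 1 / real n) * Gamma (al - 1)" unfolding aln by simp
    then show ?thesis using n1 by (simp add: field_simps)
  qed
  show ?thesis unfolding R P Gm by simp
qed

theorem proposition4p1:
  fixes n j :: nat and lam :: real
  assumes "n \<ge> 2" and "j > 0"
    and "lam \<ge> real (n - 1) * real j / 2"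
  defines "G \<equiv> (\<lambda>z::real. exp (real j * z ^ n / 2) * kummerM ((1 - 1 / real n) / 2 - lam / (real j * real n)) (1 - 1 / real n) (- real j * z ^ n))"
    and "D \<equiv> (\<lambda>z::real. exp (real j * z ^ n / 2) * kummerT ((1 - 1 / real n) / 2 - lam / (real j * real n)) (1 - 1 / real n) (- real j * z ^ n))"
  shows "\<forall>z>0. G z * deriv D z - deriv G z * D z
           = Gamma ((1 - 1 / real n) - 1) / Gamma ((1 - 1 / real n) - ((1 - 1 / real n) / 2 - lam / (real j * real n))) * real j powr (1 / real n)"
proof (intro allI impI)
  fix z :: real assume z: "z > 0"
  have n2: "real n \<ge> 2" using assms(1) by simp
  have jp: "real j > 0" using assms(2) by simp
  have al0: "0 < 1 - 1 / real n" using n2 by (simp add: field_simps)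
  have al1: "1 - 1 / real n < 1" using n2 by simp
  have "real (n - 1) = real n - 1" using assms(1) by (simp add: of_nat_diff)
  then have lam: "lam \<ge> (real n - 1) * real j / 2" using assms(3) by simp
  have "(1 - 1 / real n) / 2 = ((real n - 1) * real j / 2) / (real j * real n)"
    using n2 jp by (simp add: field_simps)
  also have "\<dots> \<le> lam / (real j * real n)"
    using lam n2 jp by (intro divide_right_mono) auto
  finally have be0: "(1 - 1 / real n) / 2 - lam / (real j * real n) \<le> 0" by simp
  show "G z * deriv D z - deriv G z * D z
           = Gamma ((1 - 1 / real n) - 1) / Gamma ((1 - 1 / real n) - ((1 - 1 / real n) / 2 - lam / (real j * real n))) * real j powr (1 / real n)"
    unfolding G_def D_def
    by (rule main_gen[OF al0 al1 be0 assms(1) assms(2) refl z])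
qed


end
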